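(* Let $\Lambda_{[m!]}=\{\{1,2,\dots,m!\}:m\in\mathbb N\}\subseteq\mathcal P_{fin}(\mathbb N)$, let $I$ be a fine ideal of $\mathfrak F(\mathcal P_{fin}(\mathbb N),\mathbb R)$ containing $I_{0,\Lambda_{[m!]}}$, and let $P$ be the probability of the NAP-space produced by $(\mathbb N,1,I)$. Then for every $k\in\mathbb N$ and every $l\in\{0,1,\dots,k-1\}$, the set $\mathbb N_{k,l}=\{nk-l:n\in\mathbb N\}$ satisfies $P(\mathbb N_{k,l})=1/k$ exactly. In particular $P(\{k,2k,3k,\dots\})=1/k$.
   Context: $\mathbb N=\{1,2,3,\dots\}$. $\mathcal P_{fin}(\Omega)$ is the set of finite subsets of $\Omega$ and $\mathfrak F=\mathfrak F(\mathcal P_{fin}(\Omega),\mathbb R)$ the real algebra of functions $\mathcal P_{fin}(\Omega)\to\mathbb R$ with pointwise operations. For $\omega\in\Omega$, $\chi_\lambda(\omega)=1$ if $\omega\in\lambda$, else $0$. An ideal $I$ of $\mathfrak F$ is fine if it is maximal and $\lambda\mapsto 1-\chi_\lambda(\omega)$ lies in $I$ for every $\omega\in\Omega$. For $\Lambda\subseteq\mathcal P_{fin}(\Omega)$, $I_{0,\Lambda}=\{\varphi\in\mathfrak F:\varphi(\lambda)=0\text{ for all }\lambda\in\Lambda\}$. The NAP-space produced by $(\Omega,w,I)$ ($w:\Omega\to\mathbb R^+$, $I$ fine) has range field $\mathfrak F/I$, $J$ the canonical projection $\varphi\mapsto\varphi+I$, and $P(A)=J\big(\lambda\mapsto\sum_{\omega\in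 A\cap\lambda}w(\omega)\big)/J\big(\lambda\mapsto\sum_{\omega\in\lambda}w(\omega)\big)$. *)

theory Defs
  imports Complex_Main "HOL-Algebra.QuotRing"
begin

text \<open>A function of type 'a set => real represents an element of the algebra; its values
  outside P_fin(Omega) are normalised to 0.\<close>

definition Pfin :: "'a set \<Rightarrow> 'a set set" where
  "Pfin \<Omega> = {L. finite L \<and> L \<subseteq> \<Omega>}"

definition Fring :: "'a set \<Rightarrow> ('a set \<Rightarrow> real) ring" where
  "Fring \<Omega> = \<lparr> carrier = {\<phi>. \<forall>L. L \<notin> Pfin \<Omega> \<longrightarrow> \<phi> L = 0},
     mult = (\<lambda>\<phi> \<psi> L. \<phi> L * \<psi> L),
     one = (\<lambda>L. if L \<in> Pfin \<Omega> then 1 else 0),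
     zero = (\<lambda>L. 0),
     add = (\<lambda>\<phi> \<psi> L. \<phi> L + \<psi> L) \<rparr>"

definition Ffun :: "'a set \<Rightarrow> ('a set \<Rightarrow> real) \<Rightarrow> ('a set \<Rightarrow> real)" where
  "Ffun \<Omega> f = (\<lambda>L. if L \<in> Pfin \<Omega> then f L else 0)"

definition chi :: "'a set \<Rightarrow> 'a \<Rightarrow> real" where
  "chi L \<omega> = (if \<omega> \<in> L then 1 else 0)"

definition fine_ideal :: "'a set \<Rightarrow> ('a set \<Rightarrow> real) set \<Rightarrow> bool" where
  "fine_ideal \<Omega> I \<longleftrightarrow> maximalideal I (Fring \<Omega>) \<and>
     (\<forall>\<omega>\<in>\<Omega>. Ffun \<Omega> (\<lambda>L. 1 - chi L \<omega>) \<in> I)"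

definition I0 :: "'a set \<Rightarrow> 'a set set \<Rightarrow> ('a set \<Rightarrow> real) set" where
  "I0 \<Omega> \<Lambda> = {\<phi> \<in> carrier (Fring \<Omega>). \<forall>L\<in>\<Lambda>. \<phi> L = 0}"

definition Jproj :: "'a set \<Rightarrow> ('a set \<Rightarrow> real) set \<Rightarrow> ('a set \<Rightarrow> real) \<Rightarrow> ('a set \<Rightarrow> real) set" where
  "Jproj \<Omega> I \<phi> = I +>\<^bsub>Fring \<Omega>\<^esub> \<phi>"

definition NAP_prob :: "'a set \<Rightarrow> ('a \<Rightarrow> real) \<Rightarrow> ('a set \<Rightarrow> real) set \<Rightarrow> 'a set
    \<Rightarrow> ('a set \<Rightarrow> real) set" where
  "NAP_prob \<Omega> w I A =
     Jproj \<Omega> I (Ffun \<Omega> (\<lambda>L. \<Sum>\<omega>\<in>A \<inter> L. w \<omega>)) \<otimes>\<^bsub>Fring \<Omega> Quot I\<^esub>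
     inv\<^bsub>Fring \<Omega> Quot I\<^esub> (Jproj \<Omega> I (Ffun \<Omega> (\<lambda>L. \<Sum>\<omega>\<in>L. w \<omega>)))"

end

theory Submission
  imports Defs
begin

lemma Fring_simps:
  "carrier (Fring \<Omega>) = {\<phi>. \<forall>L. L \<notin> Pfin \<Omega> \<longrightarrow> \<phi> L = 0}"
  "\<phi> \<otimes>\<^bsub>Fring \<Omega>\<^esub> \<psi> = (\<lambda>L. \<phi> L * \<psi> L)"
  "\<phi> \<oplus>\<^bsub>Fring \<Omega>\<^esub> \<psi> = (\<lambda>L. \<phi> L + \<psi> L)"
  "\<one>\<^bsub>Fring \<Omega>\<^esub> = (\<lambda>L. if L \<in> Pfin \<Omega> then 1 else 0)"
  "\<zero>\<^bsub>Fring \<Omega>\<^esub> = (\<lambda>L. 0)"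
  by (simp_all add: Fring_def)

lemma Ffun_carrier: "Ffun \<Omega> f \<in> carrier (Fring \<Omega>)"
  by (simp add: Fring_simps Ffun_def)

lemma Fring_cring: "cring (Fring \<Omega>)"
proof (rule cringI)
  show "abelian_group (Fring \<Omega>)"
  proof (rule abelian_groupI)
    fix x assume x: "x \<in> carrier (Fring \<Omega>)"
    show "\<exists>y\<in>carrier (Fring \<Omega>). y \<oplus>\<^bsub>Fring \<Omega>\<^esub> x = \<zero>\<^bsub>Fring \<Omega>\<^esub>"
      by (rule bexI[of _ "\<lambda>L. - x L"]) (use x in \<open>auto simp: Fring_simps\<close>)
  qed (auto simp: Fring_simps algebra_simps)
  show "comm_monoid (Fring \<Omega>)"
    by (rule comm_monoidI) (auto simp: Fring_simps algebra_simps fun_eq_iff)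
qed (auto simp: Fring_simps algebra_simps)

lemma count_lemma:
  fixes k l q :: nat
  assumes "k \<ge> 1" "l < k"
  shows "card ({n * k - l | n::nat. n \<ge> 1} \<inter> {1..q*k}) = q"
proof -
  have eq: "{n * k - l | n::nat. n \<ge> 1} \<inter> {1..q*k} = (\<lambda>n. n*k - l) ` {1..q}"
  proof (intro equalityI subsetI)
    fix x assume "x \<in> {n * k - l | n::nat. n \<ge> 1} \<inter> {1..q*k}"
    then obtain n where n: "n \<ge> 1" "x = n*k - l" "x \<le> q*k" by auto
    have "n \<le> q"
    proof (rule ccontr)
      assume "\<not> n \<le> q"
      hence "q + 1 \<le> n" by simp
      hence "(q+1)*k \<le> n*k" by (rule mult_le_mono1)
      thus False using n assms by simp
    qed
    thus "x \<in> (\<lambda>n. n*k - l) ` {1..q}" using n by auto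
  next
    fix x assume "x \<in> (\<lambda>n. n*k - l) ` {1..q}"
    then obtain n where n: "1 \<le> n" "n \<le> q" "x = n*k - l" by auto
    have "k \<le> n*k" using n by simp
    moreover have "n*k \<le> q*k" using n by simp
    ultimately have "1 \<le> x" "x \<le> q*k" using n assms by arith+
    thus "x \<in> {n * k - l | n::nat. n \<ge> 1} \<inter> {1..q*k}"
      using n by auto
  qed
  have "inj_on (\<lambda>n. n*k - l) {1..q}"
  proof (rule inj_onI)
    fix n n' assume "n \<in> {1..q}" "n' \<in> {1..q}" and e: "n*k - l = n'*k - l"
    hence "k \<le> n*k" "k \<le> n'*k" by auto
    hence "n*k = n'*k" using e assms by arith
    thus "n = n'" using assms by simp
  qed
  thus ?thesis unfolding eq by (simp add: card_image)
qed

theorem mainTheorem13: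
  fixes I :: "(nat set \<Rightarrow> real) set" and k l :: nat
  assumes "fine_ideal {1..} I"
    and "I0 {1..} {{1..fact m} | m::nat. m \<ge> 1} \<subseteq> I"
    and "k \<ge> 1" and "l < k"
  shows "NAP_prob {1..} (\<lambda>_. 1) I {n * k - l | n::nat. n \<ge> 1}
           = Jproj {1..} I (Ffun {1..} (\<lambda>_. 1 / real k))"
proof -
  let ?\<Omega> = "{1..}::nat set"
  let ?R = "Fring ?\<Omega>"
  let ?Q = "?R Quot I"
  let ?A = "{n * k - l | n::nat. n \<ge> 1}"
  define a where "a = Ffun ?\<Omega> (\<lambda>L. \<Sum>\<omega>\<in>?A \<inter> L. (1::real))"
  define b where "b = Ffun ?\<Omega> (\<lambda>L. \<Sum>\<omega>\<in>L. (1::real))"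
  define c where "c = Ffun ?\<Omega> (\<lambda>_. 1 / real k)"
  interpret R: cring ?R by (rule Fring_cring)
  have maxI: "maximalideal I ?R" and fine: "\<forall>\<omega>\<in>?\<Omega>. Ffun ?\<Omega> (\<lambda>L. 1 - chi L \<omega>) \<in> I"
    using assms(1) unfolding fine_ideal_def by auto
  interpret M: maximalideal I ?R by (rule maxI)
  interpret Q: field ?Q by (rule M.quotient_is_field) (rule Fring_cring)
  have ac: "a \<in> carrier ?R" "b \<in> carrier ?R" "c \<in> carrier ?R"
    unfolding a_def b_def c_def by (rule Ffun_carrier)+
  define d where "d = (\<lambda>L. a L - c L * b L)"
  have dc: "d \<in> carrier ?R" using ac by (auto simp: d_def Fring_simps)
  have adec: "a = (c \<otimes>\<^bsub>?R\<^esub> b) \<oplus>\<^bsub>?R\<^esub> d" by (simp add: Fring_simps d_def)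
  define \<omega> where "\<omega> = (fact k :: nat)"
  have \<omega>1: "\<omega> \<in> ?\<Omega>" by (simp add: \<omega>_def)
  define \<psi> where "\<psi> = Ffun ?\<Omega> (\<lambda>L. 1 - chi L \<omega>)"
  define e where "e = Ffun ?\<Omega> (\<lambda>L. chi L \<omega>)"
  have \<psi>I: "\<psi> \<in> I" using fine \<omega>1 by (simp add: \<psi>_def)
  have ddec: "d = (d \<otimes>\<^bsub>?R\<^esub> e) \<oplus>\<^bsub>?R\<^esub> (d \<otimes>\<^bsub>?R\<^esub> \<psi>)"
  proof
    fix L show "d L = ((d \<otimes>\<^bsub>?R\<^esub> e) \<oplus>\<^bsub>?R\<^esub> (d \<otimes>\<^bsub>?R\<^esub> \<psi>)) L"
    proof (cases "L \<in> Pfin ?\<Omega>")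
      case True thus ?thesis by (simp add: Fring_simps e_def \<psi>_def Ffun_def algebra_simps)
    next
      case False thus ?thesis using dc by (simp add: Fring_simps)
    qed
  qed
  have dpsi: "d \<otimes>\<^bsub>?R\<^esub> \<psi> \<in> I" using M.I_l_closed[OF \<psi>I dc] .
  have de: "d \<otimes>\<^bsub>?R\<^esub> e \<in> I0 ?\<Omega> {{1..fact m} | m::nat. m \<ge> 1}"
    unfolding I0_def
  proof (intro CollectI conjI ballI)
    show "d \<otimes>\<^bsub>?R\<^esub> e \<in> carrier ?R"
      using dc by (intro R.m_closed) (auto simp: e_def Ffun_carrier)
  next
    fix L :: "nat set" assume "L \<in> {{1..fact m} | m::nat. m \<ge> 1}"
    then obtain m where m: "m \<ge> 1" "L = {1..fact m}" by auto
    have LP: "L \<in> Pfin ?\<Omega>" using m by (auto simp: Pfin_def)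
    show "(d \<otimes>\<^bsub>?R\<^esub> e) L = 0"
    proof (cases "m < k")
      case True
      have "fact m < (fact k :: nat)" using True m by (intro fact_less_mono_nat) auto
      hence "\<omega> \<notin> L" using m by (auto simp: \<omega>_def)
      thus ?thesis using LP by (simp add: Fring_simps e_def Ffun_def chi_def)
    next
      case False
      hence "k dvd fact m" using assms(3) by (intro dvd_fact) auto
      then obtain q where q: "fact m = q * k" by (metis dvd_def mult.commute)
      have cA: "card (?A \<inter> L) = q" using count_lemma[OF assms(3,4), of q] m q by simp
      have cL: "card L = q * k" using m q by simp
      have "d L = 0" using LP cA cL assms(3)
        by (simp add: d_def a_def b_def c_def Ffun_def)
      thus ?thesis by (simp add: Fring_simps)
    qed
  qed
  have dI: "d \<in> I"
    using ddec M.a_closed[OF subsetD[OF assms(2) de] dpsi] by simp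
  have Jac: "I +>\<^bsub>?R\<^esub> a = I +>\<^bsub>?R\<^esub> (c \<otimes>\<^bsub>?R\<^esub> b)"
  proof -
    have "a \<ominus>\<^bsub>?R\<^esub> (c \<otimes>\<^bsub>?R\<^esub> b) = d"
      unfolding adec using ac dc by algebra
    hence "a \<ominus>\<^bsub>?R\<^esub> (c \<otimes>\<^bsub>?R\<^esub> b) \<in> I" using dI by simp
    thus ?thesis using R.quotient_eq_iff_same_a_r_cos[OF M.is_ideal ac(1) R.m_closed[OF ac(3) ac(2)]] by simp
  qed
  have bI: "b \<notin> I"
  proof
    assume "b \<in> I"
    define \<psi>1 where "\<psi>1 = Ffun ?\<Omega> (\<lambda>L. 1 - chi L 1)"
    have "\<psi>1 \<in> I" using fine by (simp add: \<psi>1_def)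
    hence sI: "b \<oplus>\<^bsub>?R\<^esub> \<psi>1 \<in> I" by (rule M.a_closed[OF \<open>b \<in> I\<close>])
    define u where "u = Ffun ?\<Omega> (\<lambda>L. 1 / (b L + \<psi>1 L))"
    have pos: "b L + \<psi>1 L \<noteq> 0" if "L \<in> Pfin ?\<Omega>" for L
    proof (cases "1 \<in> L")
      case True
      hence "card L \<ge> 1" using that by (auto simp: Pfin_def card_gt_0_iff Suc_le_eq)
      thus ?thesis using that True by (simp add: b_def \<psi>1_def Ffun_def chi_def)
    next
      case False
      thus ?thesis using that by (simp add: b_def \<psi>1_def Ffun_def chi_def)
    qed
    have "u \<otimes>\<^bsub>?R\<^esub> (b \<oplus>\<^bsub>?R\<^esub> \<psi>1) = \<one>\<^bsub>?R\<^esub>"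
      using pos by (auto simp: Fring_simps u_def Ffun_def fun_eq_iff)
    moreover have "u \<otimes>\<^bsub>?R\<^esub> (b \<oplus>\<^bsub>?R\<^esub> \<psi>1) \<in> I"
      using M.I_l_closed[OF sI] by (simp add: u_def Ffun_carrier)
    ultimately have oneI: "\<one>\<^bsub>?R\<^esub> \<in> I" by simp
    have "carrier ?R \<subseteq> I"
    proof
      fix x assume "x \<in> carrier ?R"
      thus "x \<in> I" using M.I_l_closed[OF oneI] by (metis R.r_one)
    qed
    thus False using M.I_notcarr M.a_Hcarr by blast
  qed
  have Jb_car: "I +>\<^bsub>?R\<^esub> b \<in> carrier ?Q"
    using ac R.a_rcosetsI[OF M.a_subset] by (simp add: FactRing_def)
  have Jc_car: "I +>\<^bsub>?R\<^esub> c \<in> carrier ?Q"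
    using ac R.a_rcosetsI[OF M.a_subset] by (simp add: FactRing_def)
  have Jb0: "I +>\<^bsub>?R\<^esub> b \<noteq> \<zero>\<^bsub>?Q\<^esub>"
  proof
    assume "I +>\<^bsub>?R\<^esub> b = \<zero>\<^bsub>?Q\<^esub>"
    hence "I +>\<^bsub>?R\<^esub> b = I" by (simp add: FactRing_def)
    moreover have "b \<in> I +>\<^bsub>?R\<^esub> b" by (rule M.a_rcos_self[OF ac(2)])
    ultimately show False using bI by simp
  qed
  have JbU: "I +>\<^bsub>?R\<^esub> b \<in> Units ?Q" using Jb_car Jb0 Q.field_Units by blast
  have Jmult: "I +>\<^bsub>?R\<^esub> a = (I +>\<^bsub>?R\<^esub> c) \<otimes>\<^bsub>?Q\<^esub> (I +>\<^bsub>?R\<^esub> b)"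
    using Jac M.rcoset_mult_add[OF ac(3) ac(2)] by (simp add: FactRing_def)
  have "NAP_prob ?\<Omega> (\<lambda>_. 1) I ?A = (I +>\<^bsub>?R\<^esub> a) \<otimes>\<^bsub>?Q\<^esub> inv\<^bsub>?Q\<^esub> (I +>\<^bsub>?R\<^esub> b)"
    by (simp add: NAP_prob_def Jproj_def a_def b_def)
  also have "\<dots> = I +>\<^bsub>?R\<^esub> c"
    using Jmult JbU Jb_car Jc_car Q.m_assoc[OF Jc_car Jb_car Q.Units_inv_closed[OF JbU]]
      Q.Units_r_inv[OF JbU] Q.r_one[OF Jc_car] by simp
  finally show ?thesis by (simp add: Jproj_def c_def)
qed

end
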